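(* Let $G$ be the graph with vertex set $\{a_i,b_i,c_i : i\in[4]\}\cup\{q_i^j,r_i^j : i\in[4], j\in[2]\}$ and edges: the three four-cycles $A$: $a_ia_{i\bmod 4+1}$, $B$: $b_ib_{i\bmod 4+1}$, $C$: $c_ic_{i\bmod 4+1}$ ($i\in[4]$); $q_i^j a_k, q_i^j b_k, q_i^j c_k$ for all $i,k\in[4]$, $j\in[2]$; $r_i^jq_i^j$; and $r_i^ja_i, r_i^ja_{i\bmod 4+1}, r_i^jb_i, r_i^jb_{i\bmod 4+1}, r_i^jc_i, r_i^jc_{i\bmod 4+1}$ for $i\in[4],j\in[2]$. Let $Q=\{q_i^j : i\in[4],j\in[2]\}$. Suppose $(A,\mathcal{D})$ is a planar geometric storyplan of $G$ (here $A(\cdot)$ denotes the visible-interval function), and let $I=\{A(q) : q\in Q\}$. Then there exists a set $I'\subset I$ with $|I'|\ge 6$ such that for every $[s,e]\in I'$ and every $t\in[s,e]$, all vertices of the three four-cycles $A$, $B$ and $C$ are visible at $t$.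
   Context: A storyplan of a graph $G$ on time steps $[\ell]$ is a pair $(A,\mathcal{D})$ where $A$ assigns to each vertex $v$ a nonempty interval $A(v)\subseteq[\ell]$ of consecutive integers ($v$ is visible at each $t\in A(v)$), adjacent vertices have intersecting intervals, and $\mathcal{D}$ assigns one fixed point to each vertex and one fixed curve to each edge. The frame at $t$ is the drawing under $\mathcal{D}$ of $G[\{v : t\in A(v)\}]$. The storyplan is planar geometric if every frame is a planar drawing with all edges straight-line segments. *)

theory Defs
  imports "HOL-Analysis.Analysis"
begin

text \<open>The drawing assigns a point in the plane to
  every vertex; since the storyplan is geometric, the curve of an edge {u,v} is the
  straight segment between the points of u and v, i.e. the convex hull of the image.\<close>

definition edge_seg :: "('v \<Rightarrow> real^2) \<Rightarrow> 'v set \<Rightarrow> (real^2) set" where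
  "edge_seg p e = convex hull (p ` e)"

definition planar_straight :: "'v set \<Rightarrow> 'v set set \<Rightarrow> ('v \<Rightarrow> real^2) \<Rightarrow> bool" where
  "planar_straight W F p \<longleftrightarrow>
     inj_on p W \<and>
     (\<forall>e\<in>F. \<forall>w\<in>W. w \<notin> e \<longrightarrow> p w \<notin> edge_seg p e) \<and>
     (\<forall>e1\<in>F. \<forall>e2\<in>F. e1 \<noteq> e2 \<longrightarrow> edge_seg p e1 \<inter> edge_seg p e2 \<subseteq> p ` (e1 \<inter> e2))"

definition visible :: "'v set \<Rightarrow> ('v \<Rightarrow> nat set) \<Rightarrow> nat \<Rightarrow> 'v set" where
  "visible V A t = {v \<in> V. t \<in> A v}"

definition planar_geometric_storyplan ::
  "'v set \<Rightarrow> 'v set set \<Rightarrow> nat \<Rightarrow> ('v \<Rightarrow> nat set) \<Rightarrow> ('v \<Rightarrow> real^2) \<Rightarrow> bool" where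
  "planar_geometric_storyplan V E l A p \<longleftrightarrow>
     (\<forall>v\<in>V. \<exists>s e. 1 \<le> s \<and> s \<le> e \<and> e \<le> l \<and> A v = {s..e}) \<and>
     (\<forall>u\<in>V. \<forall>v\<in>V. {u, v} \<in> E \<longrightarrow> A u \<inter> A v \<noteq> {}) \<and>
     (\<forall>t\<in>{1..l}. planar_straight (visible V A t) {e \<in> E. e \<subseteq> visible V A t} p)"

datatype vtx = Av nat | Bv nat | Cv nat | Qv nat nat | Rv nat nat

definition nxt :: "nat \<Rightarrow> nat" where "nxt i = i mod 4 + 1"

definition cycV :: "vtx set" where
  "cycV = {Av i | i. i \<in> {1..4}} \<union> {Bv i | i. i \<in> {1..4}} \<union> {Cv i | i. i \<in> {1..4}}"

definition QV :: "vtx set" where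
  "QV = {Qv i j | i j. i \<in> {1..4} \<and> j \<in> {1..2}}"

definition GV :: "vtx set" where
  "GV = cycV \<union> QV \<union> {Rv i j | i j. i \<in> {1..4} \<and> j \<in> {1..2}}"

definition GE :: "vtx set set" where
  "GE =
     {{Av i, Av (nxt i)} | i. i \<in> {1..4}} \<union>
     {{Bv i, Bv (nxt i)} | i. i \<in> {1..4}} \<union>
     {{Cv i, Cv (nxt i)} | i. i \<in> {1..4}} \<union>
     {{Qv i j, Av k} | i j k. i \<in> {1..4} \<and> k \<in> {1..4} \<and> j \<in> {1..2}} \<union>
     {{Qv i j, Bv k} | i j k. i \<in> {1..4} \<and> k \<in> {1..4} \<and> j \<in> {1..2}} \<union>
     {{Qv i j, Cv k} | i j k. i \<in> {1..4} \<and> k \<in> {1..4} \<and> j \<in> {1..2}} \<union>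
     {{Rv i j, Qv i j} | i j. i \<in> {1..4} \<and> j \<in> {1..2}} \<union>
     {{Rv i j, Av i} | i j. i \<in> {1..4} \<and> j \<in> {1..2}} \<union>
     {{Rv i j, Av (nxt i)} | i j. i \<in> {1..4} \<and> j \<in> {1..2}} \<union>
     {{Rv i j, Bv i} | i j. i \<in> {1..4} \<and> j \<in> {1..2}} \<union>
     {{Rv i j, Bv (nxt i)} | i j. i \<in> {1..4} \<and> j \<in> {1..2}} \<union>
     {{Rv i j, Cv i} | i j. i \<in> {1..4} \<and> j \<in> {1..2}} \<union>
     {{Rv i j, Cv (nxt i)} | i j. i \<in> {1..4} \<and> j \<in> {1..2}}"

end

theory Submission
  imports Defs
begin


lemma conn_side:
  assumes "connected T" "S \<inter> T = {}" "inside S \<inter> T \<noteq> {}" shows "T \<subseteq> inside S"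
proof
  fix x assume "x \<in> T"
  show "x \<in> inside S"
  proof (rule ccontr)
    assume "x \<notin> inside S"
    then have "x \<in> outside S" using \<open>x \<in> T\<close> assms(2) inside_Un_outside by blast
    then have "outside S \<inter> T \<noteq> {}" using \<open>x \<in> T\<close> by blast
    then show False using inside_outside_intersect_connected[OF assms(1,3)] assms(2) by blast
  qed
qed

lemma conn_side2:
  assumes "connected T" "S \<inter> T = {}" "T \<noteq> {}" shows "T \<subseteq> inside S \<or> T \<subseteq> outside S"
proof (cases "inside S \<inter> T = {}")
  case True
  then show ?thesis using assms(2) inside_Un_outside by blast
next
  case False
  then show ?thesis using conn_side[OF assms(1,2)] by blast
qed

lemma arc_closure_int:
  assumes "arc g" shows "path_image g \<subseteq> closure (path_image g - {pathstart g, pathfinish g})"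
proof -
  have inj: "inj_on g {0..1}" and pg: "path g" using assms by (auto simp: arc_def)
  have "g ` {0<..<1} \<subseteq> path_image g - {pathstart g, pathfinish g}"
  proof
    fix z assume "z \<in> g ` {0<..<1}"
    then obtain t where t: "t \<in> {0<..<1}" "z = g t" by blast
    have "g t \<noteq> g 0" using inj t unfolding inj_on_def by force
    moreover have "g t \<noteq> g 1" using inj t unfolding inj_on_def by force
    ultimately show "z \<in> path_image g - {pathstart g, pathfinish g}"
      using t by (auto simp: path_image_def pathstart_def pathfinish_def)
  qed
  also have "\<dots> \<subseteq> closure (path_image g - {pathstart g, pathfinish g})" by (rule closure_subset)
  finally have "g ` closure {0<..<1} \<subseteq> closure (path_image g - {pathstart g, pathfinish g})"
    by (intro image_closure_subset) (use pg in \<open>auto simp: path_def\<close>)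
  then show ?thesis by (simp add: path_image_def)
qed

lemma arc_int_ne:
  assumes "arc g" shows "path_image g - {pathstart g, pathfinish g} \<noteq> {}"
proof -
  have inj: "inj_on g {0..1}" using assms by (auto simp: arc_def)
  have "g (1/2) \<noteq> g 0" using inj unfolding inj_on_def by force
  moreover have "g (1/2) \<noteq> g 1" using inj unfolding inj_on_def by force
  ultimately have "g (1/2) \<in> path_image g - {pathstart g, pathfinish g}"
    by (auto simp: path_image_def pathstart_def pathfinish_def)
  then show ?thesis by blast
qed

lemma jordan2:
  fixes g h :: "real \<Rightarrow> complex"
  assumes "arc g" "arc h" "pathstart g = a" "pathfinish g = b" "pathstart h = a" "pathfinish h = b"
    "path_image g \<inter> path_image h = {a,b}"
  shows "inside(path_image g \<union> path_image h) \<noteq> {} \<and>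
          open(inside(path_image g \<union> path_image h)) \<and>
          connected(inside(path_image g \<union> path_image h)) \<and>
          connected(outside(path_image g \<union> path_image h)) \<and>
          frontier(inside(path_image g \<union> path_image h)) = path_image g \<union> path_image h
          \<and> compact (path_image g \<union> path_image h)"
proof -
  have sp: "simple_path (g +++ reversepath h)"
    using assms by (subst simple_path_join_loop_eq) (auto simp: arc_reversepath)
  have pi: "path_image (g +++ reversepath h) = path_image g \<union> path_image h"
    using assms by (simp add: path_image_join)
  have "pathfinish (g +++ reversepath h) = pathstart (g +++ reversepath h)" using assms by simp
  from Jordan_inside_outside[OF sp this] pi
  show ?thesis using assms by (auto intro!: compact_Un compact_path_image arc_imp_path)
qed

lemma closure_inside_sub:
  fixes S :: "'a::real_normed_vector set"
  assumes "closed S" "E \<subseteq> inside S" shows "closure E \<subseteq> inside S \<union> S"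
proof -
  have "closure E \<subseteq> closure (inside S)" using assms(2) by (rule closure_mono)
  also have "\<dots> = inside S \<union> frontier (inside S)" by (rule closure_Un_frontier)
  also have "\<dots> \<subseteq> inside S \<union> S" using frontier_inside_subset[OF assms(1)] by blast
  finally show ?thesis .
qed

lemma chord_in:
  fixes c1 c2 d :: "real \<Rightarrow> complex"
  assumes arcs: "arc c1" "arc c2" "arc d"
    and ends: "pathstart c1 = a" "pathfinish c1 = b" "pathstart c2 = a" "pathfinish c2 = b"
      "pathstart d = a" "pathfinish d = b"
    and i12: "path_image c1 \<inter> path_image c2 = {a,b}"
    and i1d: "path_image c1 \<inter> path_image d = {a,b}"
    and i2d: "path_image c2 \<inter> path_image d = {a,b}"
    and x: "x \<in> path_image c1" "x \<notin> {a,b}" and y: "y \<in> path_image c2" "y \<notin> {a,b}"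
    and E: "connected E" "E \<inter> (path_image c1 \<union> path_image c2 \<union> path_image d) = {}"
      "x \<in> closure E" "y \<in> closure E"
    and side: "path_image d - {a,b} \<subseteq> inside (path_image c1 \<union> path_image c2)"
      "E \<subseteq> inside (path_image c1 \<union> path_image c2)"
  shows False
proof -
  define C1 where "C1 = path_image c1"
  define C2 where "C2 = path_image c2"
  define D where "D = path_image d"
  have ne: "D \<inter> inside (C1 \<union> C2) \<noteq> {}"
    using arc_int_ne[OF arcs(3)] side(1) ends by (auto simp: D_def C1_def C2_def)
  have "a \<noteq> b" using arc_distinct_ends[OF arcs(1)] ends by simp
  obtain s1: "inside (C1 \<union> D) \<inter> inside (C2 \<union> D) = {}"
     and s2: "inside (C1 \<union> D) \<union> inside (C2 \<union> D) \<union> (D - {a,b}) = inside (C1 \<union> C2)"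
    using split_inside_simple_closed_curve[of c1 a b c2 d] arcs ends i12 i1d i2d ne \<open>a \<noteq> b\<close>
    by (auto simp: arc_imp_simple_path C1_def C2_def D_def Int_commute)
  have cl1: "closed (C1 \<union> D)" "closed (C2 \<union> D)"
    using arcs by (auto simp: C1_def C2_def D_def intro!: closed_Un closed_path_image arc_imp_path)
  have Esub: "E \<subseteq> inside (C1 \<union> D) \<union> inside (C2 \<union> D)"
    using side(2) E(2) s2 by (auto simp: C1_def C2_def D_def)
  show False
  proof (cases "inside (C1 \<union> D) \<inter> E = {}")
    case False
    have "E \<subseteq> inside (C1 \<union> D)"
      by (rule conn_side[OF E(1) _ False]) (use E(2) in \<open>auto simp: C1_def D_def\<close>)
    then have "y \<in> inside (C1 \<union> D) \<union> (C1 \<union> D)" using closure_inside_sub[OF cl1(1)] E(4) by blast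
    moreover have "y \<notin> C1 \<union> D" using y i12 i2d by (auto simp: C1_def C2_def D_def)
    moreover have "y \<notin> inside (C1 \<union> C2)" using y by (auto simp: C1_def C2_def inside_def)
    ultimately show False using s2 by blast
  next
    case True
    then have "E \<subseteq> inside (C2 \<union> D)" using Esub by blast
    then have "x \<in> inside (C2 \<union> D) \<union> (C2 \<union> D)" using closure_inside_sub[OF cl1(2)] E(3) by blast
    moreover have "x \<notin> C2 \<union> D" using x i12 i1d by (auto simp: C1_def C2_def D_def)
    moreover have "x \<notin> inside (C1 \<union> C2)" using x by (auto simp: C1_def C2_def inside_def)
    ultimately show False using s2 by blast
  qed
qed

lemma chord_out_aux:
  fixes c1 c2 d :: "real \<Rightarrow> complex"
  assumes arcs: "arc c1" "arc c2" "arc d"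
    and ends: "pathstart c1 = a" "pathfinish c1 = b" "pathstart c2 = a" "pathfinish c2 = b"
      "pathstart d = a" "pathfinish d = b"
    and i12: "path_image c1 \<inter> path_image c2 = {a,b}"
    and i1d: "path_image c1 \<inter> path_image d = {a,b}"
    and i2d: "path_image c2 \<inter> path_image d = {a,b}"
    and x: "x \<in> path_image c1" "x \<notin> {a,b}" and y: "y \<in> path_image c2" "y \<notin> {a,b}"
    and E: "connected E" "E \<inter> (path_image c1 \<union> path_image c2 \<union> path_image d) = {}"
      "x \<in> closure E" "y \<in> closure E"
    and side: "E \<subseteq> outside (path_image c1 \<union> path_image c2)"
    and meet: "path_image c2 \<inter> inside (path_image c1 \<union> path_image d) \<noteq> {}"
  shows False
proof -
  define C1 where "C1 = path_image c1"
  define C2 where "C2 = path_image c2"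
  define D where "D = path_image d"
  have "a \<noteq> b" using arc_distinct_ends[OF arcs(1)] ends by simp
  obtain s1: "inside (C1 \<union> C2) \<inter> inside (D \<union> C2) = {}"
     and s2: "inside (C1 \<union> C2) \<union> inside (D \<union> C2) \<union> (C2 - {a,b}) = inside (C1 \<union> D)"
    using split_inside_simple_closed_curve[of c1 a b d c2] arcs ends i12 i1d i2d meet \<open>a \<noteq> b\<close>
    by (auto simp: arc_imp_simple_path C1_def C2_def D_def Int_commute)
  have cl: "closed (C1 \<union> D)" "closed (D \<union> C2)"
    using arcs by (auto simp: C1_def C2_def D_def intro!: closed_Un closed_path_image arc_imp_path)
  have op: "open (inside (C1 \<union> D))" using cl(1) by (rule open_inside)
  have "y \<in> inside (C1 \<union> D)" using y s2 by (auto simp: C2_def)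
  then have "inside (C1 \<union> D) \<inter> closure E \<noteq> {}" using E(4) by blast
  then have "inside (C1 \<union> D) \<inter> E \<noteq> {}" using open_Int_closure_eq_empty[OF op] by blast
  then have "E \<subseteq> inside (C1 \<union> D)"
    by (intro conn_side[OF E(1)]) (use E(2) in \<open>auto simp: C1_def D_def\<close>)
  moreover have "E \<inter> inside (C1 \<union> C2) = {}" using side
    by (auto simp: C1_def C2_def inside_def outside_def)
  ultimately have "E \<subseteq> inside (D \<union> C2)" using s2 E(2) by (auto simp: C2_def)
  then have "x \<in> inside (D \<union> C2) \<union> (D \<union> C2)" using closure_inside_sub[OF cl(2)] E(3) by blast
  moreover have "x \<notin> C2 \<union> D" using x i12 i1d by (auto simp: C1_def C2_def D_def)
  moreover have "x \<notin> inside (C1 \<union> D)" using x by (auto simp: C1_def D_def inside_def)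
  ultimately show False using s2 by blast
qed

lemma outside_Un_jan:
  fixes S T :: "complex set"
  assumes "compact S" "compact T" "connected (S \<inter> T)" "connected (outside S)" "connected (outside T)"
    and z: "z \<in> outside S" "z \<in> outside T"
  shows "z \<in> outside (S \<union> T)"
proof -
  have "bounded (S \<union> T)" using assms by (auto intro: compact_imp_bounded)
  then obtain w where w: "w \<in> outside (S \<union> T)" using outside_bounded_nonempty by blast
  have wS: "w \<in> outside S" "w \<in> outside T" using w outside_mono[of S "S \<union> T"] outside_mono[of T "S \<union> T"]
    by auto
  have "connected_component (- S) z w"
    unfolding connected_component_def
    by (rule exI[of _ "outside S"]) (use z wS assms(4) outside_no_overlap in blast)
  moreover have "connected_component (- T) z w"
    unfolding connected_component_def
    by (rule exI[of _ "outside T"]) (use z wS assms(5) outside_no_overlap in blast)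
  ultimately have cc: "connected_component (- (S \<union> T)) z w"
    using Janiszewski[of S T z w] assms by (auto intro: compact_imp_closed)
  then have "connected_component_set (- (S \<union> T)) z = connected_component_set (- (S \<union> T)) w"
    using connected_component_eq[of w "- (S \<union> T)" z] by (simp add: mem_Collect_eq)
  moreover have "z \<notin> S \<union> T" using z outside_no_overlap by blast
  ultimately show ?thesis using w by (auto simp: outside_def)
qed

lemma tri_aux:
  fixes c1 c2 d :: "real \<Rightarrow> complex"
  assumes arcs: "arc c1" "arc c2" "arc d"
    and ends: "pathstart c1 = a" "pathfinish c1 = b" "pathstart c2 = a" "pathfinish c2 = b"
      "pathstart d = a" "pathfinish d = b"
    and i12: "path_image c1 \<inter> path_image c2 = {a,b}"
    and i1d: "path_image c1 \<inter> path_image d = {a,b}"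
    and i2d: "path_image c2 \<inter> path_image d = {a,b}"
    and side: "path_image d - {a,b} \<subseteq> outside (path_image c1 \<union> path_image c2)"
    and no: "path_image c2 \<inter> inside (path_image c1 \<union> path_image d) = {}"
    and z: "z \<in> inside (path_image c1 \<union> path_image d)" "z \<in> inside (path_image c1 \<union> path_image c2)"
  shows False
proof -
  define C1 where "C1 = path_image c1"
  define C2 where "C2 = path_image c2"
  define D where "D = path_image d"
  have j: "connected (inside (C1 \<union> D))" "frontier (inside (C1 \<union> D)) = C1 \<union> D"
    using jordan2[OF arcs(1,3) ends(1,2,5,6) i1d] by (auto simp: C1_def D_def)
  have cl: "closed (C1 \<union> C2)"
    using arcs by (auto simp: C1_def C2_def intro!: closed_Un closed_path_image arc_imp_path)
  have "inside (C1 \<union> D) \<subseteq> inside (C1 \<union> C2)"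
  proof (rule conn_side[OF j(1)])
    show "(C1 \<union> C2) \<inter> inside (C1 \<union> D) = {}" using no by (auto simp: C1_def C2_def D_def inside_def)
    show "inside (C1 \<union> C2) \<inter> inside (C1 \<union> D) \<noteq> {}" using z by (auto simp: C1_def C2_def D_def)
  qed
  then have "closure (inside (C1 \<union> D)) \<subseteq> inside (C1 \<union> C2) \<union> (C1 \<union> C2)"
    by (rule closure_inside_sub[OF cl])
  moreover have "C1 \<union> D \<subseteq> closure (inside (C1 \<union> D))" using j(2) by (auto simp: frontier_def)
  moreover obtain w where w: "w \<in> D - {a,b}" using arc_int_ne[OF arcs(3)] ends by (auto simp: D_def)
  ultimately have "w \<in> inside (C1 \<union> C2) \<union> (C1 \<union> C2)" by blast
  moreover have "w \<notin> C1 \<union> C2" using w i1d i2d by (auto simp: C1_def C2_def D_def)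
  moreover have "w \<in> outside (C1 \<union> C2)" using w side by (auto simp: C1_def C2_def D_def)
  ultimately show False by (auto simp: inside_def outside_def)
qed

lemma tri:
  fixes c1 c2 d :: "real \<Rightarrow> complex"
  assumes arcs: "arc c1" "arc c2" "arc d"
    and ends: "pathstart c1 = a" "pathfinish c1 = b" "pathstart c2 = a" "pathfinish c2 = b"
      "pathstart d = a" "pathfinish d = b"
    and i12: "path_image c1 \<inter> path_image c2 = {a,b}"
    and i1d: "path_image c1 \<inter> path_image d = {a,b}"
    and i2d: "path_image c2 \<inter> path_image d = {a,b}"
    and side: "path_image d - {a,b} \<subseteq> outside (path_image c1 \<union> path_image c2)"
  shows "path_image c2 \<inter> inside (path_image c1 \<union> path_image d) \<noteq> {} \<or>
         path_image c1 \<inter> inside (path_image c2 \<union> path_image d) \<noteq> {}"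
proof (rule ccontr)
  assume "\<not> ?thesis"
  then have n1: "path_image c2 \<inter> inside (path_image c1 \<union> path_image d) = {}"
    and n2: "path_image c1 \<inter> inside (path_image c2 \<union> path_image d) = {}" by auto
  define C1 where "C1 = path_image c1"
  define C2 where "C2 = path_image c2"
  define D where "D = path_image d"
  have j12: "inside (C1 \<union> C2) \<noteq> {}" "compact (C1 \<union> C2)"
    using jordan2[OF arcs(1,2) ends(1-4) i12] by (auto simp: C1_def C2_def)
  have j1d: "connected (outside (C1 \<union> D))" "compact (C1 \<union> D)"
    using jordan2[OF arcs(1,3) ends(1,2,5,6) i1d] by (auto simp: C1_def D_def)
  have j2d: "connected (outside (C2 \<union> D))" "compact (C2 \<union> D)"
    using jordan2[OF arcs(2,3) ends(3,4,5,6) i2d] by (auto simp: C2_def D_def)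
  obtain z where z: "z \<in> inside (C1 \<union> C2)" using j12 by blast
  have ab: "a \<in> C1" "b \<in> C1" "a \<in> D" "b \<in> D" using ends pathstart_in_path_image[of c1]
    pathfinish_in_path_image[of c1] pathstart_in_path_image[of d] pathfinish_in_path_image[of d]
    by (auto simp: C1_def D_def)
  have zn: "z \<notin> C1 \<union> C2" using z inside_no_overlap by blast
  have "z \<notin> D"
  proof
    assume "z \<in> D"
    then have "z \<in> D - {a,b}" using zn ab by auto
    then have "z \<in> outside (C1 \<union> C2)" using side by (auto simp: C1_def C2_def D_def)
    then show False using z inside_Int_outside by blast
  qed
  show False
  proof (cases "z \<in> inside (C1 \<union> D) \<or> z \<in> inside (C2 \<union> D)")
    case True
    then show False
    proof
      assume "z \<in> inside (C1 \<union> D)"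
      then show False using tri_aux[OF arcs ends i12 i1d i2d side n1] z
        by (auto simp: C1_def C2_def D_def)
    next
      assume "z \<in> inside (C2 \<union> D)"
      then show False using tri_aux[OF arcs(2,1,3) ends(3,4,1,2,5,6) _ i2d i1d _ n2] z i12 side
        by (auto simp: C1_def C2_def D_def Un_commute Int_commute)
    qed
  next
    case False
    then have "z \<in> outside (C1 \<union> D)" "z \<in> outside (C2 \<union> D)"
      using zn \<open>z \<notin> D\<close> inside_Un_outside by blast+
    moreover have "(C1 \<union> D) \<inter> (C2 \<union> D) = D" using i12 ab by (auto simp: C1_def C2_def)
    moreover have "connected D" using arcs(3) by (auto simp: D_def intro!: connected_path_image arc_imp_path)
    ultimately have "z \<in> outside ((C1 \<union> D) \<union> (C2 \<union> D))"
      using outside_Un_jan[of "C1 \<union> D" "C2 \<union> D" z] j1d j2d by auto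
    then have "z \<in> outside (C1 \<union> C2)" using outside_mono[of "C1 \<union> C2" "(C1 \<union> D) \<union> (C2 \<union> D)"] by blast
    then show False using z inside_Int_outside by blast
  qed
qed

lemma chord:
  fixes c1 c2 d :: "real \<Rightarrow> complex"
  assumes arcs: "arc c1" "arc c2" "arc d"
    and ends: "pathstart c1 = a" "pathfinish c1 = b" "pathstart c2 = a" "pathfinish c2 = b"
      "pathstart d = a" "pathfinish d = b"
    and i12: "path_image c1 \<inter> path_image c2 = {a,b}"
    and i1d: "path_image c1 \<inter> path_image d = {a,b}"
    and i2d: "path_image c2 \<inter> path_image d = {a,b}"
    and x: "x \<in> path_image c1" "x \<notin> {a,b}" and y: "y \<in> path_image c2" "y \<notin> {a,b}"
    and E: "connected E" "E \<inter> (path_image c1 \<union> path_image c2 \<union> path_image d) = {}"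
      "x \<in> closure E" "y \<in> closure E"
    and side: "(path_image d - {a,b} \<subseteq> inside (path_image c1 \<union> path_image c2) \<and>
                E \<subseteq> inside (path_image c1 \<union> path_image c2)) \<or>
               (path_image d - {a,b} \<subseteq> outside (path_image c1 \<union> path_image c2) \<and>
                E \<subseteq> outside (path_image c1 \<union> path_image c2))"
  shows False
  using side
proof
  assume "path_image d - {a,b} \<subseteq> inside (path_image c1 \<union> path_image c2) \<and>
                E \<subseteq> inside (path_image c1 \<union> path_image c2)"
  then show False using chord_in[OF arcs ends i12 i1d i2d x y E] by blast
next
  assume o: "path_image d - {a,b} \<subseteq> outside (path_image c1 \<union> path_image c2) \<and>
                E \<subseteq> outside (path_image c1 \<union> path_image c2)"
  have "path_image c2 \<inter> inside (path_image c1 \<union> path_image d) \<noteq> {} \<or>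
         path_image c1 \<inter> inside (path_image c2 \<union> path_image d) \<noteq> {}"
    using tri[OF arcs ends i12 i1d i2d] o by blast
  then show False
  proof
    assume "path_image c2 \<inter> inside (path_image c1 \<union> path_image d) \<noteq> {}"
    then show False using chord_out_aux[OF arcs ends i12 i1d i2d x y E] o by blast
  next
    assume m: "path_image c1 \<inter> inside (path_image c2 \<union> path_image d) \<noteq> {}"
    have E2: "E \<inter> (path_image c2 \<union> path_image c1 \<union> path_image d) = {}" using E(2) by blast
    show False
      using chord_out_aux[OF arcs(2,1,3) ends(3,4,1,2,5,6) _ i2d i1d y x E(1) E2 E(4,3) _ m] o i12
      by (auto simp: Un_commute Int_commute)
  qed
qed

lemma arc3:
  assumes "arc p" "arc q" "arc r" "pathfinish p = pathstart q" "pathfinish q = pathstart r"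
    "path_image p \<inter> path_image q \<subseteq> {pathstart q}" "path_image q \<inter> path_image r \<subseteq> {pathstart r}"
    "path_image p \<inter> path_image r = {}"
  shows "arc (p +++ q +++ r)" "path_image (p +++ q +++ r) = path_image p \<union> path_image q \<union> path_image r"
    "pathstart (p +++ q +++ r) = pathstart p" "pathfinish (p +++ q +++ r) = pathfinish r"
proof -
  have "arc (q +++ r)" using assms by (intro arc_join) auto
  moreover have "path_image (q +++ r) = path_image q \<union> path_image r" using assms by (simp add: path_image_join)
  ultimately show "arc (p +++ q +++ r)" using assms by (intro arc_join) auto
  show "path_image (p +++ q +++ r) = path_image p \<union> path_image q \<union> path_image r"
    using assms by (simp add: path_image_join Un_assoc)
qed (use assms in auto)

lemma K33_arcs:
  fixes u v :: "nat \<Rightarrow> complex" and g :: "nat \<Rightarrow> nat \<Rightarrow> real \<Rightarrow> complex"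
  assumes arc: "\<And>i j. i < 3 \<Longrightarrow> j < 3 \<Longrightarrow> arc (g i j)"
    and st: "\<And>i j. i < 3 \<Longrightarrow> j < 3 \<Longrightarrow> pathstart (g i j) = u i"
    and fin: "\<And>i j. i < 3 \<Longrightarrow> j < 3 \<Longrightarrow> pathfinish (g i j) = v j"
    and int: "\<And>i j i' j'. i < 3 \<Longrightarrow> j < 3 \<Longrightarrow> i' < 3 \<Longrightarrow> j' < 3 \<Longrightarrow> (i, j) \<noteq> (i', j') \<Longrightarrow>
       path_image (g i j) \<inter> path_image (g i' j') \<subseteq>
         (if i = i' then {u i} else {}) \<union> (if j = j' then {v j} else {})"
  shows False
proof -
  define G where "G i j = path_image (g i j)" for i j
  have i0001: "G 0 0 \<inter> G 0 1 \<subseteq> {u 0}" using int[of 0 0 0 1] by (simp add: G_def)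
  have i0002: "G 0 0 \<inter> G 0 2 \<subseteq> {u 0}" using int[of 0 0 0 2] by (simp add: G_def)
  have i0010: "G 0 0 \<inter> G 1 0 \<subseteq> {v 0}" using int[of 0 0 1 0] by (simp add: G_def)
  have i0011: "G 0 0 \<inter> G 1 1 \<subseteq> {}" using int[of 0 0 1 1] by (simp add: G_def)
  have i0012: "G 0 0 \<inter> G 1 2 \<subseteq> {}" using int[of 0 0 1 2] by (simp add: G_def)
  have i0020: "G 0 0 \<inter> G 2 0 \<subseteq> {v 0}" using int[of 0 0 2 0] by (simp add: G_def)
  have i0021: "G 0 0 \<inter> G 2 1 \<subseteq> {}" using int[of 0 0 2 1] by (simp add: G_def)
  have i0022: "G 0 0 \<inter> G 2 2 \<subseteq> {}" using int[of 0 0 2 2] by (simp add: G_def)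
  have i0102: "G 0 1 \<inter> G 0 2 \<subseteq> {u 0}" using int[of 0 1 0 2] by (simp add: G_def)
  have i0110: "G 0 1 \<inter> G 1 0 \<subseteq> {}" using int[of 0 1 1 0] by (simp add: G_def)
  have i0111: "G 0 1 \<inter> G 1 1 \<subseteq> {v 1}" using int[of 0 1 1 1] by (simp add: G_def)
  have i0112: "G 0 1 \<inter> G 1 2 \<subseteq> {}" using int[of 0 1 1 2] by (simp add: G_def)
  have i0120: "G 0 1 \<inter> G 2 0 \<subseteq> {}" using int[of 0 1 2 0] by (simp add: G_def)
  have i0121: "G 0 1 \<inter> G 2 1 \<subseteq> {v 1}" using int[of 0 1 2 1] by (simp add: G_def)
  have i0122: "G 0 1 \<inter> G 2 2 \<subseteq> {}" using int[of 0 1 2 2] by (simp add: G_def)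
  have i0210: "G 0 2 \<inter> G 1 0 \<subseteq> {}" using int[of 0 2 1 0] by (simp add: G_def)
  have i0211: "G 0 2 \<inter> G 1 1 \<subseteq> {}" using int[of 0 2 1 1] by (simp add: G_def)
  have i0212: "G 0 2 \<inter> G 1 2 \<subseteq> {v 2}" using int[of 0 2 1 2] by (simp add: G_def)
  have i0220: "G 0 2 \<inter> G 2 0 \<subseteq> {}" using int[of 0 2 2 0] by (simp add: G_def)
  have i0221: "G 0 2 \<inter> G 2 1 \<subseteq> {}" using int[of 0 2 2 1] by (simp add: G_def)
  have i0222: "G 0 2 \<inter> G 2 2 \<subseteq> {v 2}" using int[of 0 2 2 2] by (simp add: G_def)
  have i1011: "G 1 0 \<inter> G 1 1 \<subseteq> {u 1}" using int[of 1 0 1 1] by (simp add: G_def)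
  have i1012: "G 1 0 \<inter> G 1 2 \<subseteq> {u 1}" using int[of 1 0 1 2] by (simp add: G_def)
  have i1020: "G 1 0 \<inter> G 2 0 \<subseteq> {v 0}" using int[of 1 0 2 0] by (simp add: G_def)
  have i1021: "G 1 0 \<inter> G 2 1 \<subseteq> {}" using int[of 1 0 2 1] by (simp add: G_def)
  have i1022: "G 1 0 \<inter> G 2 2 \<subseteq> {}" using int[of 1 0 2 2] by (simp add: G_def)
  have i1112: "G 1 1 \<inter> G 1 2 \<subseteq> {u 1}" using int[of 1 1 1 2] by (simp add: G_def)
  have i1120: "G 1 1 \<inter> G 2 0 \<subseteq> {}" using int[of 1 1 2 0] by (simp add: G_def)
  have i1121: "G 1 1 \<inter> G 2 1 \<subseteq> {v 1}" using int[of 1 1 2 1] by (simp add: G_def)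
  have i1122: "G 1 1 \<inter> G 2 2 \<subseteq> {}" using int[of 1 1 2 2] by (simp add: G_def)
  have i1220: "G 1 2 \<inter> G 2 0 \<subseteq> {}" using int[of 1 2 2 0] by (simp add: G_def)
  have i1221: "G 1 2 \<inter> G 2 1 \<subseteq> {}" using int[of 1 2 2 1] by (simp add: G_def)
  have i1222: "G 1 2 \<inter> G 2 2 \<subseteq> {v 2}" using int[of 1 2 2 2] by (simp add: G_def)
  have i2021: "G 2 0 \<inter> G 2 1 \<subseteq> {u 2}" using int[of 2 0 2 1] by (simp add: G_def)
  have i2022: "G 2 0 \<inter> G 2 2 \<subseteq> {u 2}" using int[of 2 0 2 2] by (simp add: G_def)
  have i2122: "G 2 1 \<inter> G 2 2 \<subseteq> {u 2}" using int[of 2 1 2 2] by (simp add: G_def)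
  have m00: "u 0 \<in> G 0 0" "v 0 \<in> G 0 0" using st[of 0 0] fin[of 0 0] pathstart_in_path_image[of "g 0 0"] pathfinish_in_path_image[of "g 0 0"] by (auto simp: G_def)
  have m01: "u 0 \<in> G 0 1" "v 1 \<in> G 0 1" using st[of 0 1] fin[of 0 1] pathstart_in_path_image[of "g 0 1"] pathfinish_in_path_image[of "g 0 1"] by (auto simp: G_def)
  have m02: "u 0 \<in> G 0 2" "v 2 \<in> G 0 2" using st[of 0 2] fin[of 0 2] pathstart_in_path_image[of "g 0 2"] pathfinish_in_path_image[of "g 0 2"] by (auto simp: G_def)
  have m10: "u 1 \<in> G 1 0" "v 0 \<in> G 1 0" using st[of 1 0] fin[of 1 0] pathstart_in_path_image[of "g 1 0"] pathfinish_in_path_image[of "g 1 0"] by (auto simp: G_def)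
  have m11: "u 1 \<in> G 1 1" "v 1 \<in> G 1 1" using st[of 1 1] fin[of 1 1] pathstart_in_path_image[of "g 1 1"] pathfinish_in_path_image[of "g 1 1"] by (auto simp: G_def)
  have m12: "u 1 \<in> G 1 2" "v 2 \<in> G 1 2" using st[of 1 2] fin[of 1 2] pathstart_in_path_image[of "g 1 2"] pathfinish_in_path_image[of "g 1 2"] by (auto simp: G_def)
  have m20: "u 2 \<in> G 2 0" "v 0 \<in> G 2 0" using st[of 2 0] fin[of 2 0] pathstart_in_path_image[of "g 2 0"] pathfinish_in_path_image[of "g 2 0"] by (auto simp: G_def)
  have m21: "u 2 \<in> G 2 1" "v 1 \<in> G 2 1" using st[of 2 1] fin[of 2 1] pathstart_in_path_image[of "g 2 1"] pathfinish_in_path_image[of "g 2 1"] by (auto simp: G_def)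
  have m22: "u 2 \<in> G 2 2" "v 2 \<in> G 2 2" using st[of 2 2] fin[of 2 2] pathstart_in_path_image[of "g 2 2"] pathfinish_in_path_image[of "g 2 2"] by (auto simp: G_def)
  have a00: "arc (g 0 0)" "pathstart (g 0 0) = u 0" "pathfinish (g 0 0) = v 0" using arc st fin by auto
  have a01: "arc (g 0 1)" "pathstart (g 0 1) = u 0" "pathfinish (g 0 1) = v 1" using arc st fin by auto
  have a02: "arc (g 0 2)" "pathstart (g 0 2) = u 0" "pathfinish (g 0 2) = v 2" using arc st fin by auto
  have a10: "arc (g 1 0)" "pathstart (g 1 0) = u 1" "pathfinish (g 1 0) = v 0" using arc st fin by auto
  have a11: "arc (g 1 1)" "pathstart (g 1 1) = u 1" "pathfinish (g 1 1) = v 1" using arc st fin by auto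
  have a12: "arc (g 1 2)" "pathstart (g 1 2) = u 1" "pathfinish (g 1 2) = v 2" using arc st fin by auto
  have a20: "arc (g 2 0)" "pathstart (g 2 0) = u 2" "pathfinish (g 2 0) = v 0" using arc st fin by auto
  have a21: "arc (g 2 1)" "pathstart (g 2 1) = u 2" "pathfinish (g 2 1) = v 1" using arc st fin by auto
  have a22: "arc (g 2 2)" "pathstart (g 2 2) = u 2" "pathfinish (g 2 2) = v 2" using arc st fin by auto
  have du01: "u 0 \<noteq> u 1" using m00(1) m11(1) i0011 by auto
  have dv01: "v 0 \<noteq> v 1" using m00(2) m11(2) i0011 by auto
  have du02: "u 0 \<noteq> u 2" using m00(1) m21(1) i0021 by auto
  have dv02: "v 0 \<noteq> v 2" using m00(2) m12(2) i0012 by auto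
  have du12: "u 1 \<noteq> u 2" using m10(1) m21(1) i1021 by auto
  have dv12: "v 1 \<noteq> v 2" using m01(2) m12(2) i0112 by auto
  have duv00: "u 0 \<noteq> v 0" using m01(1) m10(2) i0110 by auto
  have duv01: "u 0 \<noteq> v 1" using m02(1) m11(2) i0211 by auto
  have duv02: "u 0 \<noteq> v 2" using m00(1) m12(2) i0012 by auto
  have duv10: "u 1 \<noteq> v 0" using m11(1) m20(2) i1120 by auto
  have duv11: "u 1 \<noteq> v 1" using m12(1) m21(2) i1221 by auto
  have duv12: "u 1 \<noteq> v 2" using m10(1) m22(2) i1022 by auto
  have duv20: "u 2 \<noteq> v 0" using m21(1) m00(2) i0021 by auto
  have duv21: "u 2 \<noteq> v 1" using m22(1) m01(2) i0122 by auto
  have duv22: "u 2 \<noteq> v 2" using m20(1) m02(2) i0220 by auto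

  note dist = du01 dv01 du02 dv02 du12 dv12 duv00 duv01 duv02 duv10 duv11 duv12 duv20 duv21 duv22
  define H where "H = G 0 0 \<union> G 1 0 \<union> G 1 1 \<union> G 2 1 \<union> G 2 2 \<union> G 0 2"
  define c1 where "c1 = g 0 0 +++ reversepath (g 1 0) +++ g 1 1"
  define c2 where "c2 = g 0 2 +++ reversepath (g 2 2) +++ g 2 1"
  define c3 where "c3 = g 1 1 +++ reversepath (g 2 1) +++ g 2 2"
  define c4 where "c4 = g 1 0 +++ reversepath (g 0 0) +++ g 0 2"
  have c1: "arc c1" "path_image c1 = G 0 0 \<union> G 1 0 \<union> G 1 1" "pathstart c1 = u 0" "pathfinish c1 = v 1"
    using arc3[of "g 0 0" "reversepath (g 1 0)" "g 1 1"] a00 a10 a11 i0010 i0011 i1011 m00 m10 m11 dist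
    by (auto simp: c1_def G_def arc_reversepath)
  have c2: "arc c2" "path_image c2 = G 0 2 \<union> G 2 2 \<union> G 2 1" "pathstart c2 = u 0" "pathfinish c2 = v 1"
    using arc3[of "g 0 2" "reversepath (g 2 2)" "g 2 1"] a02 a22 a21 i0221 i0222 i2122 m02 m22 m21 dist
    by (auto simp: c2_def G_def arc_reversepath)
  have c3: "arc c3" "path_image c3 = G 1 1 \<union> G 2 1 \<union> G 2 2" "pathstart c3 = u 1" "pathfinish c3 = v 2"
    using arc3[of "g 1 1" "reversepath (g 2 1)" "g 2 2"] a11 a21 a22 i1121 i1122 i2122 m11 m21 m22 dist
    by (auto simp: c3_def G_def arc_reversepath)
  have c4: "arc c4" "path_image c4 = G 1 0 \<union> G 0 0 \<union> G 0 2" "pathstart c4 = u 1" "pathfinish c4 = v 2"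
    using arc3[of "g 1 0" "reversepath (g 0 0)" "g 0 2"] a10 a00 a02 i0002 i0010 i0210 m10 m00 m02 dist
    by (auto simp: c4_def G_def arc_reversepath)
  have H12: "path_image c1 \<union> path_image c2 = H" using c1 c2 by (auto simp: H_def)
  have H34: "path_image c3 \<union> path_image c4 = H" using c3 c4 by (auto simp: H_def)
  define D1 where "D1 = G 0 1 - {u 0, v 1}"
  define D2 where "D2 = G 1 2 - {u 1, v 2}"
  define D3 where "D3 = G 2 0 - {u 2, v 0}"
  have conn: "connected D1" "connected D2" "connected D3"
    using connected_simple_path_endless[OF arc_imp_simple_path[OF a01(1)]]
      connected_simple_path_endless[OF arc_imp_simple_path[OF a12(1)]]
      connected_simple_path_endless[OF arc_imp_simple_path[OF a20(1)]] a01 a12 a20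
    by (auto simp: D1_def D2_def D3_def G_def)
  have ne: "D1 \<noteq> {}" "D2 \<noteq> {}" "D3 \<noteq> {}"
    using arc_int_ne[OF a01(1)] arc_int_ne[OF a12(1)] arc_int_ne[OF a20(1)] a01 a12 a20
    by (auto simp: D1_def D2_def D3_def G_def)
  have clo: "G 0 1 \<subseteq> closure D1" "G 1 2 \<subseteq> closure D2" "G 2 0 \<subseteq> closure D3"
    using arc_closure_int[OF a01(1)] arc_closure_int[OF a12(1)] arc_closure_int[OF a20(1)] a01 a12 a20
    by (auto simp: D1_def D2_def D3_def G_def)
  have dj1: "H \<inter> D1 = {}" unfolding H_def D1_def using i0001 i0102 i0110 i0111 i0121 i0122 by blast
  have dj2: "H \<inter> D2 = {}" unfolding H_def D2_def using i0012 i0212 i1012 i1112 i1221 i1222 by blast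
  have dj3: "H \<inter> D3 = {}" unfolding H_def D3_def using i0020 i0220 i1020 i1120 i2021 i2022 by blast
  have s1: "D1 \<subseteq> inside H \<or> D1 \<subseteq> outside H" by (rule conn_side2[OF conn(1) dj1 ne(1)])
  have s2: "D2 \<subseteq> inside H \<or> D2 \<subseteq> outside H" by (rule conn_side2[OF conn(2) dj2 ne(2)])
  have s3: "D3 \<subseteq> inside H \<or> D3 \<subseteq> outside H" by (rule conn_side2[OF conn(3) dj3 ne(3)])
  have i12: "path_image c1 \<inter> path_image c2 = {u 0, v 1}" unfolding c1(2) c2(2) using i0002 i0021 i0022 i0210 i0211 i1021 i1022 i1121 i1122 m00 m02 m11 m21 by blast
  have i1d: "path_image c1 \<inter> path_image (g 0 1) = {u 0, v 1}" unfolding c1(2) G_def[symmetric] using i0001 i0110 i0111 m00 m01 m11 by blast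
  have i2d: "path_image c2 \<inter> path_image (g 0 1) = {u 0, v 1}" unfolding c2(2) G_def[symmetric] using i0102 i0121 i0122 m02 m01 m21 by blast
  have i34: "path_image c3 \<inter> path_image c4 = {u 1, v 2}" unfolding c3(2) c4(2) using i0011 i0021 i0022 i0211 i0221 i0222 i1011 i1021 i1022 m11 m10 m22 m02 by blast
  have i3d: "path_image c3 \<inter> path_image (g 1 2) = {u 1, v 2}" unfolding c3(2) G_def[symmetric] using i1112 i1221 i1222 m11 m12 m22 by blast
  have i4d: "path_image c4 \<inter> path_image (g 1 2) = {u 1, v 2}" unfolding c4(2) G_def[symmetric] using i0012 i0212 i1012 m10 m12 m02 by blast
  have "(D1 \<subseteq> inside H \<and> D2 \<subseteq> inside H) \<or> (D1 \<subseteq> outside H \<and> D2 \<subseteq> outside H) \<or>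
        (D1 \<subseteq> inside H \<and> D3 \<subseteq> inside H) \<or> (D1 \<subseteq> outside H \<and> D3 \<subseteq> outside H) \<or>
        (D2 \<subseteq> inside H \<and> D3 \<subseteq> inside H) \<or> (D2 \<subseteq> outside H \<and> D3 \<subseteq> outside H)"
    using s1 s2 s3 by blast
  moreover have "\<not> ((D1 \<subseteq> inside H \<and> D2 \<subseteq> inside H) \<or> (D1 \<subseteq> outside H \<and> D2 \<subseteq> outside H))"
  proof
    assume side: "(D1 \<subseteq> inside H \<and> D2 \<subseteq> inside H) \<or> (D1 \<subseteq> outside H \<and> D2 \<subseteq> outside H)"
    show False
    proof (rule chord[OF c1(1) c2(1) a01(1) c1(3,4) c2(3,4) a01(2,3) i12 i1d i2d, of "u 1" "v 2" D2])
      show "u 1 \<in> path_image c1" "u 1 \<notin> {u 0, v 1}" "v 2 \<in> path_image c2" "v 2 \<notin> {u 0, v 1}"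
        using c1 c2 m00 m01 m02 m10 m11 m12 m20 m21 m22 dist by auto
      show "connected D2" by (rule conn(2))
      show "D2 \<inter> (path_image c1 \<union> path_image c2 \<union> path_image (g 0 1)) = {}"
        unfolding c1(2) c2(2) D2_def G_def[symmetric] using i0012 i0112 i0212 i1012 i1112 i1221 i1222 by blast
      show "u 1 \<in> closure D2" "v 2 \<in> closure D2" using clo m12 by blast+
      show "path_image (g 0 1) - {u 0, v 1} \<subseteq> inside (path_image c1 \<union> path_image c2) \<and>
          D2 \<subseteq> inside (path_image c1 \<union> path_image c2) \<or>
          path_image (g 0 1) - {u 0, v 1} \<subseteq> outside (path_image c1 \<union> path_image c2) \<and>
          D2 \<subseteq> outside (path_image c1 \<union> path_image c2)"
        using side unfolding H12 D1_def G_def by blast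
    qed
  qed
  moreover have "\<not> ((D1 \<subseteq> inside H \<and> D3 \<subseteq> inside H) \<or> (D1 \<subseteq> outside H \<and> D3 \<subseteq> outside H))"
  proof
    assume side: "(D1 \<subseteq> inside H \<and> D3 \<subseteq> inside H) \<or> (D1 \<subseteq> outside H \<and> D3 \<subseteq> outside H)"
    show False
    proof (rule chord[OF c1(1) c2(1) a01(1) c1(3,4) c2(3,4) a01(2,3) i12 i1d i2d, of "v 0" "u 2" D3])
      show "v 0 \<in> path_image c1" "v 0 \<notin> {u 0, v 1}" "u 2 \<in> path_image c2" "u 2 \<notin> {u 0, v 1}"
        using c1 c2 m00 m01 m02 m10 m11 m12 m20 m21 m22 dist by auto
      show "connected D3" by (rule conn(3))
      show "D3 \<inter> (path_image c1 \<union> path_image c2 \<union> path_image (g 0 1)) = {}"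
        unfolding c1(2) c2(2) D3_def G_def[symmetric] using i0020 i0120 i0220 i1020 i1120 i2021 i2022 by blast
      show "v 0 \<in> closure D3" "u 2 \<in> closure D3" using clo m20 by blast+
      show "path_image (g 0 1) - {u 0, v 1} \<subseteq> inside (path_image c1 \<union> path_image c2) \<and>
          D3 \<subseteq> inside (path_image c1 \<union> path_image c2) \<or>
          path_image (g 0 1) - {u 0, v 1} \<subseteq> outside (path_image c1 \<union> path_image c2) \<and>
          D3 \<subseteq> outside (path_image c1 \<union> path_image c2)"
        using side unfolding H12 D1_def G_def by blast
    qed
  qed
  moreover have "\<not> ((D2 \<subseteq> inside H \<and> D3 \<subseteq> inside H) \<or> (D2 \<subseteq> outside H \<and> D3 \<subseteq> outside H))"
  proof
    assume side: "(D2 \<subseteq> inside H \<and> D3 \<subseteq> inside H) \<or> (D2 \<subseteq> outside H \<and> D3 \<subseteq> outside H)"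
    show False
    proof (rule chord[OF c3(1) c4(1) a12(1) c3(3,4) c4(3,4) a12(2,3) i34 i3d i4d, of "u 2" "v 0" D3])
      show "u 2 \<in> path_image c3" "u 2 \<notin> {u 1, v 2}" "v 0 \<in> path_image c4" "v 0 \<notin> {u 1, v 2}"
        using c3 c4 m00 m01 m02 m10 m11 m12 m20 m21 m22 dist by auto
      show "connected D3" by (rule conn(3))
      show "D3 \<inter> (path_image c3 \<union> path_image c4 \<union> path_image (g 1 2)) = {}"
        unfolding c3(2) c4(2) D3_def G_def[symmetric] using i0020 i0220 i1020 i1120 i1220 i2021 i2022 by blast
      show "u 2 \<in> closure D3" "v 0 \<in> closure D3" using clo m20 by blast+
      show "path_image (g 1 2) - {u 1, v 2} \<subseteq> inside (path_image c3 \<union> path_image c4) \<and>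
          D3 \<subseteq> inside (path_image c3 \<union> path_image c4) \<or>
          path_image (g 1 2) - {u 1, v 2} \<subseteq> outside (path_image c3 \<union> path_image c4) \<and>
          D3 \<subseteq> outside (path_image c3 \<union> path_image c4)"
        using side unfolding H34 D2_def G_def by blast
    qed
  qed
  ultimately show False by blast
qed





lemma K33_gen:
  fixes P :: "'v \<Rightarrow> complex" and U V :: "nat \<Rightarrow> 'v" and g0 :: "real \<Rightarrow> complex"
  assumes dU: "\<And>i i'. i < 3 \<Longrightarrow> i' < 3 \<Longrightarrow> U i = U i' \<Longrightarrow> i = i'"
    and dV: "\<And>j j'. j < 3 \<Longrightarrow> j' < 3 \<Longrightarrow> V j = V j' \<Longrightarrow> j = j'"
    and dUV: "\<And>i j. i < 3 \<Longrightarrow> j < 3 \<Longrightarrow> U i \<noteq> V j"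
    and injP: "inj_on P (U ` {..<3} \<union> V ` {..<3})"
    and segs: "\<And>i j i' j'. i < 3 \<Longrightarrow> j < 3 \<Longrightarrow> i' < 3 \<Longrightarrow> j' < 3 \<Longrightarrow> (i, j) \<noteq> (0, 0) \<Longrightarrow>
       (i', j') \<noteq> (0, 0) \<Longrightarrow> (i, j) \<noteq> (i', j') \<Longrightarrow>
       closed_segment (P (U i)) (P (V j)) \<inter> closed_segment (P (U i')) (P (V j'))
         \<subseteq> P ` ({U i, V j} \<inter> {U i', V j'})"
    and g0: "arc g0" "pathstart g0 = P (U 0)" "pathfinish g0 = P (V 0)"
    and g0int: "\<And>i j. i < 3 \<Longrightarrow> j < 3 \<Longrightarrow> (i, j) \<noteq> (0, 0) \<Longrightarrow>
       path_image g0 \<inter> closed_segment (P (U i)) (P (V j)) \<subseteq> P ` ({U 0, V 0} \<inter> {U i, V j})"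
  shows False
proof -
  define g where "g i j = (if i = 0 \<and> j = 0 then g0 else linepath (P (U i)) (P (V j)))" for i j :: nat
  have PUV: "P (U i) \<noteq> P (V j)" if "i < 3" "j < 3" for i j
    using injP dUV[OF that] that by (auto dest: inj_onD)
  have PU: "P (U i) = P (U i') \<longleftrightarrow> i = i'" if "i < 3" "i' < 3" for i i'
    using injP dU[OF that] that by (auto dest: inj_onD)
  have PV: "P (V j) = P (V j') \<longleftrightarrow> j = j'" if "j < 3" "j' < 3" for j j'
    using injP dV[OF that] that by (auto dest: inj_onD)
  have int_eq: "P ` ({U i, V j} \<inter> {U i', V j'}) \<subseteq>
      (if i = i' then {P (U i)} else {}) \<union> (if j = j' then {P (V j)} else {})"
    if "i < 3" "j < 3" "i' < 3" "j' < 3" for i j i' j'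
    using dU[of i i'] dV[of j j'] dUV[of i j'] dUV[of i' j] that by auto
  show False
  proof (rule K33_arcs[of g "\<lambda>i. P (U i)" "\<lambda>j. P (V j)"])
    show "arc (g i j)" if "i < 3" "j < 3" for i j
      using g0 PUV[OF that] by (auto simp: g_def)
    show "pathstart (g i j) = P (U i)" if "i < 3" "j < 3" for i j
      using g0 by (auto simp: g_def)
    show "pathfinish (g i j) = P (V j)" if "i < 3" "j < 3" for i j
      using g0 by (auto simp: g_def)
    show "path_image (g i j) \<inter> path_image (g i' j') \<subseteq>
         (if i = i' then {P (U i)} else {}) \<union> (if j = j' then {P (V j)} else {})"
      if "i < 3" "j < 3" "i' < 3" "j' < 3" "(i, j) \<noteq> (i', j')" for i j i' j'
    proof -
      have z3: "(0::nat) < 3" by simp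
      have pi: "path_image (g a b) = (if a = 0 \<and> b = 0 then path_image g0 else closed_segment (P (U a)) (P (V b)))" for a b
        by (simp add: g_def)
      show ?thesis
      proof (cases "(i, j) = (0, 0)")
        case True
        then have "(i', j') \<noteq> (0, 0)" using that by auto
        then have h: "path_image (g i j) \<inter> path_image (g i' j') \<subseteq> P ` ({U 0, V 0} \<inter> {U i', V j'})"
          using g0int[of i' j'] True that(3,4) unfolding pi by auto
        have ij: "i = 0" "j = 0" using True by auto
        show ?thesis unfolding ij using h[unfolded ij] int_eq[OF z3 z3 that(3) that(4)] by (rule subset_trans)
      next
        case False
        show ?thesis
        proof (cases "(i', j') = (0, 0)")
          case True
          then have h: "path_image (g i' j') \<inter> path_image (g i j) \<subseteq> P ` ({U 0, V 0} \<inter> {U i, V j})"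
            using g0int[of i j] False that(1,2) unfolding pi by auto
          have ij: "i' = 0" "j' = 0" using True by auto
          have h2: "path_image (g 0 0) \<inter> path_image (g i j) \<subseteq> (if 0 = i then {P (U 0)} else {}) \<union> (if 0 = j then {P (V 0)} else {})"
            using h[unfolded ij] int_eq[OF z3 z3 that(1) that(2)] by (rule subset_trans)
          have "(if 0 = i then {P (U 0)} else {}) \<union> (if 0 = j then {P (V 0)} else {}) = (if i = 0 then {P (U i)} else {}) \<union> (if j = 0 then {P (V j)} else {})"
            by auto
          then show ?thesis unfolding ij using h2 by (simp only: Int_commute)
        next
          case F2: False
          have "path_image (g i j) \<inter> path_image (g i' j') \<subseteq> P ` ({U i, V j} \<inter> {U i', V j'})"
            using segs[of i j i' j'] False F2 that unfolding pi by auto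
          then show ?thesis using int_eq[OF that(1-4)] by (rule subset_trans)
        qed
      qed
    qed
  qed
qed

definition cpx :: "real^2 \<Rightarrow> complex" where "cpx z = Complex (z$1) (z$2)"

lemma linear_cpx: "linear cpx"
  by (rule linearI) (simp_all add: cpx_def complex_eq_iff)

lemma inj_cpx: "inj cpx"
proof (rule injI)
  fix x y :: "real^2" assume "cpx x = cpx y"
  then have "x$1 = y$1" "x$2 = y$2" by (simp_all add: cpx_def complex_eq_iff)
  then show "x = y" by (simp add: vec_eq_iff forall_2)
qed

lemma seg_img: "cpx ` edge_seg p {a, b} = closed_segment (cpx (p a)) (cpx (p b))"
proof -
  have "cpx ` edge_seg p {a, b} = cpx ` (convex hull {p a, p b})" by (simp add: edge_seg_def)
  also have "\<dots> = convex hull (cpx ` {p a, p b})" by (rule convex_hull_linear_image[OF linear_cpx])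
  also have "\<dots> = convex hull {cpx (p a), cpx (p b)}" by simp
  also have "\<dots> = closed_segment (cpx (p a)) (cpx (p b))" by (rule segment_convex_hull[symmetric])
  finally show ?thesis .
qed

lemma planar_segs:
  assumes ps: "planar_straight W F p" and e: "{a, b} \<in> F" "{c, d} \<in> F" "{a, b} \<noteq> {c, d}"
  shows "closed_segment (cpx (p a)) (cpx (p b)) \<inter> closed_segment (cpx (p c)) (cpx (p d))
    \<subseteq> (cpx \<circ> p) ` ({a, b} \<inter> {c, d})"
proof -
  have h: "\<forall>e1\<in>F. \<forall>e2\<in>F. e1 \<noteq> e2 \<longrightarrow> edge_seg p e1 \<inter> edge_seg p e2 \<subseteq> p ` (e1 \<inter> e2)"
    using ps unfolding planar_straight_def by (elim conjE)
  have "edge_seg p {a, b} \<inter> edge_seg p {c, d} \<subseteq> p ` ({a, b} \<inter> {c, d})"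
    using mp[OF bspec[OF bspec[OF h e(1)] e(2)] e(3)] .
  then have "cpx ` (edge_seg p {a, b} \<inter> edge_seg p {c, d}) \<subseteq> cpx ` p ` ({a, b} \<inter> {c, d})"
    by (rule image_mono)
  moreover have "cpx ` (edge_seg p {a, b} \<inter> edge_seg p {c, d}) = cpx ` edge_seg p {a, b} \<inter> cpx ` edge_seg p {c, d}"
    using inj_cpx by (rule image_Int)
  moreover have "cpx ` p ` ({a, b} \<inter> {c, d}) = (cpx \<circ> p) ` ({a, b} \<inter> {c, d})" by (rule image_comp)
  ultimately show ?thesis unfolding seg_img by simp
qed

lemma K33_planar:
  fixes U V :: "nat \<Rightarrow> 'v"
  assumes ps: "planar_straight W F p"
    and dU: "\<And>i i'. i < 3 \<Longrightarrow> i' < 3 \<Longrightarrow> U i = U i' \<Longrightarrow> i = i'"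
    and dV: "\<And>j j'. j < 3 \<Longrightarrow> j' < 3 \<Longrightarrow> V j = V j' \<Longrightarrow> j = j'"
    and dUV: "\<And>i j. i < 3 \<Longrightarrow> j < 3 \<Longrightarrow> U i \<noteq> V j"
    and inW: "\<And>i. i < 3 \<Longrightarrow> U i \<in> W" "\<And>j. j < 3 \<Longrightarrow> V j \<in> W"
    and edges: "\<And>i j. i < 3 \<Longrightarrow> j < 3 \<Longrightarrow> (i, j) \<noteq> (0, 0) \<Longrightarrow> {U i, V j} \<in> F"
    and sp: "{U 0, V 0} \<in> F \<or> (\<exists>m\<in>W. (\<forall>i<3. m \<noteq> U i \<and> m \<noteq> V i) \<and> {U 0, m} \<in> F \<and> {m, V 0} \<in> F)"
  shows False
proof -
  define P where "P = cpx \<circ> p"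
  have "inj_on p W" using ps unfolding planar_straight_def by (elim conjE)
  then have injW: "inj_on P W" unfolding P_def
    by (rule comp_inj_on) (rule inj_on_subset[OF inj_cpx], simp)
  have injP: "inj_on P (U ` {..<3} \<union> V ` {..<3})"
    by (rule inj_on_subset[OF injW]) (use inW in auto)
  have edist: "{U i, V j} \<noteq> {U i', V j'}" if "i < 3" "j < 3" "i' < 3" "j' < 3" "(i, j) \<noteq> (i', j')" for i j i' j'
  proof
    assume eq: "{U i, V j} = {U i', V j'}"
    have "U i \<in> {U i', V j'}" using eq by blast
    then have "U i = U i'" using dUV[of i j'] that by auto
    then have "i = i'" using dU that by blast
    have "V j \<in> {U i', V j'}" using eq by blast
    then have "V j = V j'" using dUV[of i' j] that by auto
    then have "j = j'" using dV that by blast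
    then show False using \<open>i = i'\<close> that by simp
  qed
  have segs: "closed_segment (P (U i)) (P (V j)) \<inter> closed_segment (P (U i')) (P (V j'))
         \<subseteq> P ` ({U i, V j} \<inter> {U i', V j'})"
    if "i < 3" "j < 3" "i' < 3" "j' < 3" "(i, j) \<noteq> (0, 0)" "(i', j') \<noteq> (0, 0)" "(i, j) \<noteq> (i', j')" for i j i' j'
    using planar_segs[OF ps edges[of i j] edges[of i' j'] edist[of i j i' j']] that by (simp add: P_def)
  from sp show False
  proof
    assume e00: "{U 0, V 0} \<in> F"
    have edges': "{U i, V j} \<in> F" if "i < 3" "j < 3" for i j
      using edges[OF that] e00 by (cases "(i, j) = (0, 0)") auto
    show False
    proof (rule K33_gen[OF dU dV dUV injP segs, of "linepath (P (U 0)) (P (V 0))"])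
      have "P (U 0) \<noteq> P (V 0)"
      proof
        assume "P (U 0) = P (V 0)"
        then have "U 0 = V 0" using inj_onD[OF injW _ inW(1)[of 0] inW(2)[of 0]] by simp
        then show False using dUV[of 0 0] by simp
      qed
      then show "arc (linepath (P (U 0)) (P (V 0)))" by simp
      show "path_image (linepath (P (U 0)) (P (V 0))) \<inter> closed_segment (P (U i)) (P (V j))
          \<subseteq> P ` ({U 0, V 0} \<inter> {U i, V j})" if "i < 3" "j < 3" "(i, j) \<noteq> (0, 0)" for i j
        using planar_segs[OF ps edges'[of 0 0] edges'[of i j] edist[of 0 0 i j]] that by (simp add: P_def)
    qed auto
  next
    assume "\<exists>m\<in>W. (\<forall>i<3. m \<noteq> U i \<and> m \<noteq> V i) \<and> {U 0, m} \<in> F \<and> {m, V 0} \<in> F"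
    then obtain m where m: "m \<in> W" "\<And>i. i < 3 \<Longrightarrow> m \<noteq> U i" "\<And>i. i < 3 \<Longrightarrow> m \<noteq> V i"
      "{U 0, m} \<in> F" "{m, V 0} \<in> F" by blast
    have m0: "m \<noteq> U 0" "m \<noteq> V 0" using m(2)[of 0] m(3)[of 0] by simp_all
    have U0m: "P (U 0) \<noteq> P m"
    proof
      assume "P (U 0) = P m"
      then have "U 0 = m" using inj_onD[OF injW _ inW(1)[of 0] m(1)] by simp
      then show False using m0 by simp
    qed
    have mV0: "P m \<noteq> P (V 0)"
    proof
      assume "P m = P (V 0)"
      then have "m = V 0" using inj_onD[OF injW _ m(1) inW(2)[of 0]] by simp
      then show False using m0 by simp
    qed
    have nU0V0: "U 0 \<noteq> V 0" using dUV[of 0 0] by simp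
    have neq: "{U 0, m} \<noteq> {m, V 0}"
    proof
      assume "{U 0, m} = {m, V 0}"
      then have "U 0 \<in> {m, V 0}" by blast
      then show False using nU0V0 m0 by blast
    qed
    have mm: "{U 0, m} \<inter> {m, V 0} = {m}" using nU0V0 m0 by blast
    have i1: "closed_segment (P (U 0)) (P m) \<inter> closed_segment (P m) (P (V 0)) \<subseteq> {P m}"
      using planar_segs[OF ps m(4,5) neq] unfolding mm by (simp add: P_def)
    have arcg: "arc (linepath (P (U 0)) (P m) +++ linepath (P m) (P (V 0)))"
      using U0m mV0 i1 by (intro arc_join) auto
    show False
    proof (rule K33_gen[OF dU dV dUV injP segs arcg])
      show "path_image (linepath (P (U 0)) (P m) +++ linepath (P m) (P (V 0))) \<inter> closed_segment (P (U i)) (P (V j))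
          \<subseteq> P ` ({U 0, V 0} \<inter> {U i, V j})" if "i < 3" "j < 3" "(i, j) \<noteq> (0, 0)" for i j
      proof -
        have mi: "m \<noteq> U i" "m \<noteq> V j" using m(2)[of i] m(3)[of j] that by auto
        have a: "{U 0, m} \<noteq> {U i, V j}" "{m, V 0} \<noteq> {U i, V j}"
        proof -
          show "{U 0, m} \<noteq> {U i, V j}"
          proof
            assume "{U 0, m} = {U i, V j}"
            then have "m \<in> {U i, V j}" by blast
            then show False using mi by blast
          qed
          show "{m, V 0} \<noteq> {U i, V j}"
          proof
            assume "{m, V 0} = {U i, V j}"
            then have "m \<in> {U i, V j}" by blast
            then show False using mi by blast
          qed
        qed
        have "closed_segment (P (U 0)) (P m) \<inter> closed_segment (P (U i)) (P (V j)) \<subseteq> P ` ({U 0, m} \<inter> {U i, V j})"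
          using planar_segs[OF ps m(4) edges[OF that] a(1)] by (simp add: P_def)
        moreover have "closed_segment (P m) (P (V 0)) \<inter> closed_segment (P (U i)) (P (V j)) \<subseteq> P ` ({m, V 0} \<inter> {U i, V j})"
          using planar_segs[OF ps m(5) edges[OF that] a(2)] by (simp add: P_def)
        moreover have "{U 0, m} \<inter> {U i, V j} \<subseteq> {U 0, V 0} \<inter> {U i, V j}" "{m, V 0} \<inter> {U i, V j} \<subseteq> {U 0, V 0} \<inter> {U i, V j}"
          using mi by auto
        ultimately show ?thesis by (auto simp: path_image_join)
      qed
    qed auto
  qed
qed




lemma in14: "(i::nat) \<in> {1..4} \<longleftrightarrow> i = 1 \<or> i = 2 \<or> i = 3 \<or> i = 4" by auto
lemma in12: "(i::nat) \<in> {1..2} \<longleftrightarrow> i = 1 \<or> i = 2" by auto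

lemma cycV_eq: "cycV = {Av 1, Av 2, Av 3, Av 4, Bv 1, Bv 2, Bv 3, Bv 4, Cv 1, Cv 2, Cv 3, Cv 4}"
  unfolding cycV_def in14 by blast

lemma QV_eq: "QV = {Qv 1 1, Qv 1 2, Qv 2 1, Qv 2 2, Qv 3 1, Qv 3 2, Qv 4 1, Qv 4 2}"
  unfolding QV_def in14 in12 by blast

lemma card_QV: "card QV = 8" unfolding QV_eq by simp

lemma finite_QV: "finite QV" unfolding QV_eq by simp

lemma cyc_GV: "cycV \<subseteq> GV" and Q_GV: "QV \<subseteq> GV" unfolding GV_def by auto

lemma QV_cyc: "q \<in> QV \<Longrightarrow> x \<in> cycV \<Longrightarrow> q \<noteq> x"
  unfolding QV_def cycV_def by auto

lemma QV_not: "q \<in> QV \<Longrightarrow> q \<noteq> Av k" "q \<in> QV \<Longrightarrow> q \<noteq> Bv k"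
  unfolding QV_def by auto

lemma edge_qx: assumes "q \<in> QV" "x \<in> cycV" shows "{q, x} \<in> GE"
proof -
  obtain i j where q: "q = Qv i j" "i \<in> {1..4}" "j \<in> {1..2}" using assms(1) unfolding QV_def by blast
  from assms(2) consider (a) k where "x = Av k" "k \<in> {1..4}" | (b) k where "x = Bv k" "k \<in> {1..4}"
    | (c) k where "x = Cv k" "k \<in> {1..4}" unfolding cycV_def by blast
  then show ?thesis
  proof cases
    case a
    then have "{q, x} \<in> {{Qv i j, Av k} | i j k. i \<in> {1..4} \<and> k \<in> {1..4} \<and> j \<in> {1..2}}"
      using q by blast
    then show ?thesis unfolding GE_def by blast
  next
    case b
    then have "{q, x} \<in> {{Qv i j, Bv k} | i j k. i \<in> {1..4} \<and> k \<in> {1..4} \<and> j \<in> {1..2}}"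
      using q by blast
    then show ?thesis unfolding GE_def by blast
  next
    case c
    then have "{q, x} \<in> {{Qv i j, Cv k} | i j k. i \<in> {1..4} \<and> k \<in> {1..4} \<and> j \<in> {1..2}}"
      using q by blast
    then show ?thesis unfolding GE_def by blast
  qed
qed

lemma edge_aa: assumes "i \<in> {1..4}" shows "{Av i, Av (nxt i)} \<in> GE"
proof -
  have "{Av i, Av (nxt i)} \<in> {{Av i, Av (nxt i)} | i. i \<in> {1..4}}" using assms by blast
  then show ?thesis unfolding GE_def by blast
qed

lemma edge_sym: "{a, b} \<in> GE \<Longrightarrow> {b, a} \<in> GE" by (simp add: insert_commute)

lemma frame:
  assumes "planar_geometric_storyplan GV GE l A p" "t \<in> {1..l}"
  shows "planar_straight (visible GV A t) {e \<in> GE. e \<subseteq> visible GV A t} p"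
  using assms unfolding planar_geometric_storyplan_def by blast

lemma vis: "x \<in> visible V A t \<longleftrightarrow> x \<in> V \<and> t \<in> A x" by (simp add: visible_def)

lemma lt3: "(i::nat) < 3 \<longleftrightarrow> i = 0 \<or> i = 1 \<or> i = 2" by auto


lemma K1:
  assumes sp: "planar_geometric_storyplan GV GE l A p" and t: "t \<in> {1..l}"
    and q: "q0 \<in> QV" "q1 \<in> QV" "q2 \<in> QV" "q0 \<noteq> q1" "q0 \<noteq> q2" "q1 \<noteq> q2"
    and x: "x0 \<in> cycV" "x1 \<in> cycV" "x2 \<in> cycV" "x0 \<noteq> x1" "x0 \<noteq> x2" "x1 \<noteq> x2"
    and vq: "t \<in> A q0" "t \<in> A q1" "t \<in> A q2"
    and vx: "t \<in> A x0" "t \<in> A x1" "t \<in> A x2"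
  shows False
proof -
  define U where "U i = (if i = 0 then q0 else if i = 1 then q1 else q2)" for i :: nat
  define V where "V j = (if j = 0 then x0 else if j = 1 then x1 else x2)" for j :: nat
  have UQ: "U i \<in> QV" for i unfolding U_def using q by auto
  have VC: "V j \<in> cycV" for j unfolding V_def using x by auto
  have tU: "t \<in> A (U i)" for i unfolding U_def using vq by auto
  have tV: "t \<in> A (V j)" for j unfolding V_def using vx by auto
  have visU: "U i \<in> visible GV A t" for i unfolding vis using subsetD[OF Q_GV UQ] tU by simp
  have visV: "V j \<in> visible GV A t" for j unfolding vis using subsetD[OF cyc_GV VC] tV by simp
  have ed: "{U i, V j} \<in> {e \<in> GE. e \<subseteq> visible GV A t}" for i j
    using edge_qx[OF UQ VC] visU[of i] visV[of j] by simp
  show False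
  proof (rule K33_planar[OF frame[OF sp t], of U V])
    show "i = i'" if "i < 3" "i' < 3" "U i = U i'" for i i' using that q unfolding U_def lt3 by auto
    show "j = j'" if "j < 3" "j' < 3" "V j = V j'" for j j' using that x unfolding V_def lt3 by auto
    show "U i \<noteq> V j" for i j using QV_cyc[OF UQ VC] .
    show "U i \<in> visible GV A t" for i by (rule visU)
    show "V j \<in> visible GV A t" for j by (rule visV)
    show "{U i, V j} \<in> {e \<in> GE. e \<subseteq> visible GV A t}" for i j by (rule ed)
    show "{U 0, V 0} \<in> {e \<in> GE. e \<subseteq> visible GV A t} \<or> (\<exists>m\<in>visible GV A t. (\<forall>i<3. m \<noteq> U i \<and> m \<noteq> V i) \<and>
        {U 0, m} \<in> {e \<in> GE. e \<subseteq> visible GV A t} \<and> {m, V 0} \<in> {e \<in> GE. e \<subseteq> visible GV A t})"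
      by (rule disjI1, rule ed)
  qed
qed

lemma K2:
  assumes sp: "planar_geometric_storyplan GV GE l A p" and t: "t \<in> {1..l}"
    and q: "q \<in> QV" "q' \<in> QV" "q \<noteq> q'" "t \<in> A q" "t \<in> A q'"
    and allx: "\<And>x. x \<in> cycV \<Longrightarrow> t \<in> A x"
  shows False
proof -
  define U where "U i = (if i = 0 then q else if i = 1 then Av 1 else Av 3)" for i :: nat
  define V where "V j = (if j = 0 then q' else if j = 1 then Av 2 else Av 4)" for j :: nat
  define F where "F = {e \<in> GE. e \<subseteq> visible GV A t}"
  have cv: "x \<in> visible GV A t" if "x \<in> cycV" for x unfolding vis using subsetD[OF cyc_GV that] allx[OF that] by simp
  have qv: "q \<in> visible GV A t" "q' \<in> visible GV A t" unfolding vis using subsetD[OF Q_GV] q by simp_all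
  have av: "Av k \<in> cycV" "Bv k \<in> cycV" if "k \<in> {1..4}" for k using that unfolding cycV_def by blast+
  have inF: "{a, b} \<in> F" if "{a, b} \<in> GE" "a \<in> visible GV A t" "b \<in> visible GV A t" for a b
    using that unfolding F_def by blast
  have qx: "{q, x} \<in> F" "{x, q} \<in> F" "{q', x} \<in> F" "{x, q'} \<in> F" if "x \<in> cycV" for x
    using inF edge_qx[OF q(1) that] edge_qx[OF q(2) that] edge_sym cv[OF that] qv that by blast+
  have aa: "{Av i, Av (nxt i)} \<in> F" "{Av (nxt i), Av i} \<in> F" if "i \<in> {1..4}" for i
  proof -
    have "nxt i \<in> {1..4}" by (auto simp: nxt_def)
    then show "{Av i, Av (nxt i)} \<in> F" "{Av (nxt i), Av i} \<in> F"
      using inF edge_aa[OF that] edge_sym cv av that by blast+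
  qed
  have qn: "q \<noteq> Av 1" "q \<noteq> Av 2" "q \<noteq> Av 3" "q \<noteq> Av 4"
    "q' \<noteq> Av 1" "q' \<noteq> Av 2" "q' \<noteq> Av 3" "q' \<noteq> Av 4"
    using QV_not(1)[OF q(1)] QV_not(1)[OF q(2)] by blast+
  have n: "nxt 1 = 2" "nxt 2 = 3" "nxt 3 = 4" "nxt 4 = 1" by (simp_all add: nxt_def)
  have UV: "U i \<in> visible GV A t" "V i \<in> visible GV A t" for i
    unfolding U_def V_def using qv cv av by auto
  show False
  proof (rule K33_planar[OF frame[OF sp t], of U V])
    show "i = i'" if "i < 3" "i' < 3" "U i = U i'" for i i' using that q qn
      unfolding U_def lt3 by auto
    show "j = j'" if "j < 3" "j' < 3" "V j = V j'" for j j' using that q qn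
      unfolding V_def lt3 by auto
    show "U i \<noteq> V j" if "i < 3" "j < 3" for i j using that q qn
      unfolding U_def V_def lt3 by auto
    show "U i \<in> visible GV A t" for i by (rule UV)
    show "V j \<in> visible GV A t" for j by (rule UV)
    show "{U i, V j} \<in> {e \<in> GE. e \<subseteq> visible GV A t}" if "i < 3" "j < 3" "(i, j) \<noteq> (0, 0)" for i j
    proof -
      have "{U i, V j} \<in> F"
        using that qx av aa[of 1] aa[of 2] aa[of 3] aa[of 4] unfolding U_def V_def lt3 n by auto
      then show ?thesis by (simp add: F_def)
    qed
    have b: "Bv 1 \<in> visible GV A t" "Bv 1 \<in> cycV" using cv av by auto
    have "Bv 1 \<noteq> U i \<and> Bv 1 \<noteq> V i" if "i < 3" for i
      using that QV_cyc[OF q(1) b(2)] QV_cyc[OF q(2) b(2)] unfolding U_def V_def by auto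
    moreover have "{U 0, Bv 1} \<in> F" "{Bv 1, V 0} \<in> F" using qx[OF b(2)] by (simp_all add: U_def V_def)
    ultimately show "{U 0, V 0} \<in> {e \<in> GE. e \<subseteq> visible GV A t} \<or> (\<exists>m\<in>visible GV A t. (\<forall>i<3. m \<noteq> U i \<and> m \<noteq> V i) \<and>
        {U 0, m} \<in> {e \<in> GE. e \<subseteq> visible GV A t} \<and> {m, V 0} \<in> {e \<in> GE. e \<subseteq> visible GV A t})"
      using b unfolding F_def by blast
  qed
qed


theorem lemma3:
  fixes l :: nat and A :: "vtx \<Rightarrow> nat set" and p :: "vtx \<Rightarrow> real^2"
  assumes "planar_geometric_storyplan GV GE l A p"
  shows "\<exists>I' \<subseteq> A ` QV. card I' \<ge> 6 \<and>
           (\<forall>J \<in> I'. \<forall>t \<in> J. cycV \<subseteq> visible GV A t)"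
proof -
  note sp = assms
  have "\<forall>v\<in>GV. \<exists>x. 1 \<le> fst x \<and> fst x \<le> snd x \<and> snd x \<le> l \<and> A v = {fst x..snd x}"
  proof
    fix v assume "v \<in> GV"
    then obtain a b where "1 \<le> a \<and> a \<le> b \<and> b \<le> l \<and> A v = {a..b}"
      using sp unfolding planar_geometric_storyplan_def by blast
    then show "\<exists>x. 1 \<le> fst x \<and> fst x \<le> snd x \<and> snd x \<le> l \<and> A v = {fst x..snd x}"
      by (intro exI[of _ "(a, b)"]) simp
  qed
  then obtain f where f: "\<forall>v\<in>GV. 1 \<le> fst (f v) \<and> fst (f v) \<le> snd (f v) \<and> snd (f v) \<le> l \<and> A v = {fst (f v)..snd (f v)}"
    by (rule bchoice[elim_format]) blast
  define s where "s v = fst (f v)" for v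
  define e where "e v = snd (f v)" for v
  have se: "1 \<le> s v" "s v \<le> e v" "e v \<le> l" "A v = {s v..e v}" if "v \<in> GV" for v
    using f that by (auto simp: s_def e_def)
  have inA: "t \<in> A v \<longleftrightarrow> s v \<le> t \<and> t \<le> e v" if "v \<in> GV" for v t using se[OF that] by simp
  have adjE: "\<forall>u\<in>GV. \<forall>v\<in>GV. {u, v} \<in> GE \<longrightarrow> A u \<inter> A v \<noteq> {}"
    using sp unfolding planar_geometric_storyplan_def by (elim conjE)
  have adj2: "s u \<le> e v \<and> s v \<le> e u" if "u \<in> GV" "v \<in> GV" "{u, v} \<in> GE" for u v
  proof -
    have "A u \<inter> A v \<noteq> {}" using adjE that by blast
    then obtain z where "z \<in> A u" "z \<in> A v" by blast
    then show ?thesis using inA[OF that(1)] inA[OF that(2)] by auto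
  qed
  have qx: "s q \<le> e x \<and> s x \<le> e q" if "q \<in> QV" "x \<in> cycV" for q x
    using adj2[OF subsetD[OF Q_GV that(1)] subsetD[OF cyc_GV that(2)] edge_qx[OF that]] .
  have fin: "finite cycV" "cycV \<noteq> {}" unfolding cycV_eq by auto
  define L where "L = Max (s ` cycV)"
  define R where "R = Min (e ` cycV)"
  have Lge: "s x \<le> L" if "x \<in> cycV" for x unfolding L_def using fin that by auto
  have Rle: "R \<le> e x" if "x \<in> cycV" for x unfolding R_def using fin that by auto
  have "L \<in> s ` cycV" unfolding L_def using fin by (intro Max_in) auto
  then obtain xL where xL: "xL \<in> cycV" "s xL = L" by blast
  have "R \<in> e ` cycV" unfolding R_def using fin by (intro Min_in) auto
  then obtain xR where xR: "xR \<in> cycV" "e xR = R" by blast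
  have qR: "s q \<le> R" if "q \<in> QV" for q using qx[OF that xR(1)] xR by auto
  have qL: "L \<le> e q" if "q \<in> QV" for q using qx[OF that xL(1)] xL by auto
  have L1: "1 \<le> L" using se(1)[of xL] xL subsetD[OF cyc_GV xL(1)] by auto
  have Rl: "R \<le> l" using se(3)[of xR] xR subsetD[OF cyc_GV xR(1)] by auto
  have QG: "q \<in> GV" if "q \<in> QV" for q using that Q_GV by blast
  have CG: "x \<in> GV" if "x \<in> cycV" for x using that cyc_GV by blast
  show ?thesis
  proof (cases "L \<le> R")
    case True
    have allv: "t \<in> A x" if "L \<le> t" "t \<le> R" "x \<in> cycV" for t x
      using Lge[OF that(3)] Rle[OF that(3)] that inA[OF CG[OF that(3)]] by auto
    have tl: "t \<in> {1..l}" if "L \<le> t" "t \<le> R" for t using that L1 Rl by auto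
    have one: "q = q'" if "q \<in> QV" "q' \<in> QV" "t \<in> A q" "t \<in> A q'" "L \<le> t" "t \<le> R" for q q' t
    proof (rule ccontr)
      assume "q \<noteq> q'"
      show False by (rule K2[OF sp tl[OF that(5,6)] that(1,2) \<open>q \<noteq> q'\<close> that(3,4) allv[OF that(5,6)]])
    qed
    define Qin where "Qin = {q \<in> QV. L \<le> s q \<and> e q \<le> R}"
    have sub: "QV - Qin \<subseteq> {q \<in> QV. L \<in> A q} \<union> {q \<in> QV. R \<in> A q}"
    proof
      fix q assume q: "q \<in> QV - Qin"
      then have "q \<in> QV" by simp
      show "q \<in> {q \<in> QV. L \<in> A q} \<union> {q \<in> QV. R \<in> A q}"
      proof (cases "L \<le> s q")
        case True
        then have "R < e q" using q by (auto simp: Qin_def)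
        then have "R \<in> A q" using qR[OF \<open>q \<in> QV\<close>] inA[OF QG[OF \<open>q \<in> QV\<close>]] by auto
        then show ?thesis using \<open>q \<in> QV\<close> by blast
      next
        case False
        then have "L \<in> A q" using qL[OF \<open>q \<in> QV\<close>] inA[OF QG[OF \<open>q \<in> QV\<close>]] by auto
        then show ?thesis using \<open>q \<in> QV\<close> by blast
      qed
    qed
    have c1: "card {q \<in> QV. L \<in> A q} \<le> Suc 0"
    proof (subst card_le_Suc0_iff_eq)
      show "finite {q \<in> QV. L \<in> A q}" using finite_QV by simp
      show "\<forall>a\<in>{q \<in> QV. L \<in> A q}. \<forall>b\<in>{q \<in> QV. L \<in> A q}. a = b"
        using one[of _ _ L] True by auto
    qed
    have c2: "card {q \<in> QV. R \<in> A q} \<le> Suc 0"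
    proof (subst card_le_Suc0_iff_eq)
      show "finite {q \<in> QV. R \<in> A q}" using finite_QV by simp
      show "\<forall>a\<in>{q \<in> QV. R \<in> A q}. \<forall>b\<in>{q \<in> QV. R \<in> A q}. a = b"
        using one[of _ _ R] True by auto
    qed
    have "card (QV - Qin) \<le> card ({q \<in> QV. L \<in> A q} \<union> {q \<in> QV. R \<in> A q})"
      by (rule card_mono[OF _ sub]) (simp add: finite_QV)
    also have "\<dots> \<le> card {q \<in> QV. L \<in> A q} + card {q \<in> QV. R \<in> A q}" by (rule card_Un_le)
    finally have "card (QV - Qin) \<le> 2" using c1 c2 by simp
    moreover have "card (QV - Qin) = card QV - card Qin"
      by (rule card_Diff_subset) (auto simp: Qin_def intro: finite_subset[OF _ finite_QV])
    ultimately have cQ: "card Qin \<ge> 6" using card_QV by simp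
    have inj: "inj_on A Qin"
    proof (rule inj_onI)
      fix q q' assume q: "q \<in> Qin" "q' \<in> Qin" "A q = A q'"
      have "q \<in> QV" "q' \<in> QV" "L \<le> s q" "s q \<le> R" using q se(2)[OF QG, of q] by (auto simp: Qin_def)
      moreover have "s q \<in> A q" using inA[OF QG[OF \<open>q \<in> QV\<close>]] se(2)[OF QG[OF \<open>q \<in> QV\<close>]] by simp
      ultimately show "q = q'" using one[of q q' "s q"] q(3) by simp
    qed
    show ?thesis
    proof (rule exI[of _ "A ` Qin"], intro conjI ballI)
      show "A ` Qin \<subseteq> A ` QV" by (auto simp: Qin_def)
      show "6 \<le> card (A ` Qin)" using card_image[OF inj] cQ by simp
      fix J t assume J: "J \<in> A ` Qin" "t \<in> J"
      then obtain q where q: "q \<in> Qin" "J = A q" by blast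
      then have "q \<in> QV" "L \<le> s q" "e q \<le> R" by (auto simp: Qin_def)
      then have "L \<le> t" "t \<le> R" using J(2) q(2) inA[OF QG[OF \<open>q \<in> QV\<close>]] by auto
      then show "cycV \<subseteq> visible GV A t" using allv CG by (auto simp: visible_def)
    qed
  next
    case False
    define M where "M = Min ((\<lambda>i. e (Av i)) ` {1..4})"
    have "M \<in> (\<lambda>i. e (Av i)) ` {1..4}" unfolding M_def by (intro Min_in) auto
    then obtain k where k: "k \<in> {1..4}" "e (Av k) = M" by blast
    have kmin: "e (Av k) \<le> e (Av i)" if "i \<in> {1..4}" for i unfolding k(2) M_def using that by auto
    have avc: "Av i \<in> cycV" if "i \<in> {1..4}" for i using that unfolding cycV_def by blast
    define pk where "pk = (k + 2) mod 4 + 1"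
    have kk: "nxt k \<in> {1..4}" "pk \<in> {1..4}" "nxt pk = k" "k \<noteq> nxt k" "k \<noteq> pk" "nxt k \<noteq> pk"
      using k(1) unfolding in14 pk_def nxt_def by auto
    define m where "m = min (e (Av k)) L"
    have ek: "s (Av k) \<le> e (Av k)" "1 \<le> s (Av k)" "e (Av k) \<le> l"
      using se[OF CG[OF avc[OF k(1)]]] by auto
    have tm: "m \<in> {1..l}" using ek L1 unfolding m_def by auto
    have mA: "m \<in> A (Av j)" if "j \<in> {1..4}" "s (Av j) \<le> e (Av k)" for j
      using inA[OF CG[OF avc[OF that(1)]]] that Lge[OF avc[OF that(1)]] kmin[OF that(1)]
      unfolding m_def by auto
    have m1: "m \<in> A (Av k)" using mA[OF k(1)] ek by simp
    have m2: "m \<in> A (Av (nxt k))"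
      using mA[OF kk(1)] adj2[OF CG[OF avc[OF k(1)]] CG[OF avc[OF kk(1)]] edge_aa[OF k(1)]] by simp
    have m3: "m \<in> A (Av pk)"
      using mA[OF kk(2)] adj2[OF CG[OF avc[OF kk(2)]] CG[OF avc[OF k(1)]] edge_aa[OF kk(2), unfolded kk(3)]] by simp
    have mq: "m \<in> A q" if "q \<in> QV" for q
      using inA[OF QG[OF that]] qR[OF that] qL[OF that] qx[OF that avc[OF k(1)]] False unfolding m_def by auto
    have Q3: "Qv 1 1 \<in> QV" "Qv 1 2 \<in> QV" "Qv 2 1 \<in> QV" unfolding QV_eq by auto
    have qd: "Qv 1 1 \<noteq> Qv 1 2" "Qv 1 1 \<noteq> Qv 2 1" "Qv 1 2 \<noteq> Qv 2 1" by simp_all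
    have ad: "Av k \<noteq> Av (nxt k)" "Av k \<noteq> Av pk" "Av (nxt k) \<noteq> Av pk" using kk(4-6) by simp_all
    show ?thesis
      using K1[OF sp tm Q3 qd avc[OF k(1)] avc[OF kk(1)] avc[OF kk(2)] ad
          mq[OF Q3(1)] mq[OF Q3(2)] mq[OF Q3(3)] m1 m2 m3] by (rule FalseE)
  qed
qed


end
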